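(* The universal $\mathfrak{gl}$-weight system $w_{\mathfrak{gl}}$ satisfies the generalized Vassiliev relations: its $\mathbb{C}$-linear extension to $\bigoplus_m\mathbb{C}[\mathbb{S}_m]$ vanishes on every one-hyper-arc element and every two-hyper-arc element. Equivalently, for every $N\ge1$, the linear extension of $w_{\mathfrak{gl}(N)}$ vanishes on all generalized Vassiliev elements.
   Context: For $N\ge1$, $E_{ij}$ ($1\le i,j\le N$) are the matrix units generating $\mathfrak{gl}(N)$, and for $\alpha\in\mathbb{S}_m$, $w_{\mathfrak{gl}(N)}(\alpha)=\sum_{i_1,\dots,i_m=1}^N E_{i_1i_{\alpha(1)}}E_{i_2i_{\alpha(2)}}\cdots E_{i_mi_{\alpha(m)}}\in ZU(\mathfrak{gl}(N))$ (it is central). Put $C_k^{(N)}=w_{\mathfrak{gl}(N)}((1,2,\dots,k))$. The universal $\mathfrak{gl}$-weight system is the (known to exist, and unique) function $w_{\mathfrak{gl}}:\bigsqcup_{m\ge0}\mathbb{S}_m\to\mathbb{C}[N,C_1,C_2,\dots]$ such that for every $N\ge1$ the specialization $N\mapsto N$, $C_k\mapsto C_k^{(N)}$ sends $w_{\mathfrak{gl}}(\alpha)$ to $w_{\mathfrak{gl}(N)}(\alpha)$; in particular $w_{\mathfrak{gl}}((1,\dots,m))=C_m$. Generalized Vassiliev elements: let $m\ge2$, $\gamma\in\mathbb{S}_{m-1}$, $q\in[m-1]\cup\{*\}$. For $t\in\{0,\dots,m-1\}$ let $\alpha_t\in\mathbb{S}_m$ be obtained by inserting a new point $x$ (free leg)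 into the line $1<\dots<m-1$ in the gap between $t$ and $t+1$, relabeling all points $1,\dots,m$ in order, letting the permutation act as $\gamma$ on old points except $q\mapsto x\mapsto\gamma(q)$ if $q\ne*$, and $x$ fixed if $q=*$. For a cycle $v$ of $\gamma$, $E(\gamma,q,v)=\sum_{j\in v}(\alpha_{j-1}-\alpha_j)$; one-hyper-arc if $q\ne*$, $q\in v$, two-hyper-arc otherwise. *)

theory Defs
  imports Complex_Main "HOL-Library.FuncSet" "HOL-Combinatorics.Permutations"
begin

text \<open>Words in the generators E_ij of gl(N): a letter (i,j) stands for E_ij.
  The free associative algebra on the E_ij is modelled as functions from words
  to complex coefficients (all elements used are finitely supported).\<close>

type_synonym glword = "(nat \<times> nat) list"
type_synonym freealg = "glword \<Rightarrow> complex"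

definition gl_idx :: "nat \<Rightarrow> (nat \<times> nat) set" where
  "gl_idx N = {1..N} \<times> {1..N}"

definition mono_fa :: "glword \<Rightarrow> freealg" where
  "mono_fa w = (\<lambda>u. if u = w then 1 else 0)"

definition gl_rel :: "glword \<Rightarrow> nat \<times> nat \<Rightarrow> nat \<times> nat \<Rightarrow> glword \<Rightarrow> freealg" where
  "gl_rel u a b v = (\<lambda>w.
      mono_fa (u @ [a, b] @ v) w - mono_fa (u @ [b, a] @ v) w
      - (if snd a = fst b then mono_fa (u @ [(fst a, snd b)] @ v) w else 0)
      + (if snd b = fst a then mono_fa (u @ [(fst b, snd a)] @ v) w else 0))"

text \<open>The two-sided ideal of the free algebra defining U(gl(N)); an element of the
  free algebra vanishes in U(gl(N)) iff it lies in this ideal.\<close>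
inductive_set gl_ideal :: "nat \<Rightarrow> freealg set" for N :: nat where
  zero: "(\<lambda>_. 0) \<in> gl_ideal N"
| add: "x \<in> gl_ideal N \<Longrightarrow> y \<in> gl_ideal N \<Longrightarrow> (\<lambda>w. x w + y w) \<in> gl_ideal N"
| smult: "x \<in> gl_ideal N \<Longrightarrow> (\<lambda>w. c * x w) \<in> gl_ideal N"
| gen: "set u \<subseteq> gl_idx N \<Longrightarrow> set v \<subseteq> gl_idx N \<Longrightarrow> a \<in> gl_idx N \<Longrightarrow> b \<in> gl_idx N
        \<Longrightarrow> gl_rel u a b v \<in> gl_ideal N"

text \<open>Lift of w_gl(N)(alpha) to the free algebra:
  sum over i : [m] -> [N] of the word E_{i1 i_alpha(1)} ... E_{im i_alpha(m)}.\<close>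
definition w_free :: "nat \<Rightarrow> nat \<Rightarrow> (nat \<Rightarrow> nat) \<Rightarrow> freealg" where
  "w_free N m \<alpha> = (\<lambda>w. of_nat (card
      {i \<in> {1..m} \<rightarrow>\<^sub>E {1..N}. map (\<lambda>k. (i k, i (\<alpha> k))) [1..<m+1] = w}))"

text \<open>Relabelling of old point p when the new point is inserted in the gap after t.\<close>
definition ins_gap :: "nat \<Rightarrow> nat \<Rightarrow> nat" where
  "ins_gap t p = (if p \<le> t then p else Suc p)"

text \<open>alpha_t in S_m; q = None stands for *. The new point has label t+1.\<close>
definition vass_perm :: "nat \<Rightarrow> (nat \<Rightarrow> nat) \<Rightarrow> nat option \<Rightarrow> nat \<Rightarrow> nat \<Rightarrow> nat" where
  "vass_perm m \<gamma> q t = (\<lambda>y.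
     if y = t + 1 then (case q of None \<Rightarrow> t + 1 | Some q' \<Rightarrow> ins_gap t (\<gamma> q'))
     else if y \<in> {1..m} then
       (let p = (if y \<le> t then y else y - 1) in
        if q = Some p then t + 1 else ins_gap t (\<gamma> p))
     else y)"

definition perm_cycle :: "(nat \<Rightarrow> nat) \<Rightarrow> nat \<Rightarrow> nat set" where
  "perm_cycle \<gamma> a = {(\<gamma> ^^ n) a | n. True}"

text \<open>Image in the free algebra of E(gamma,q,v) = sum_{j in v} (alpha_{j-1} - alpha_j).\<close>
definition gen_vassiliev :: "nat \<Rightarrow> nat \<Rightarrow> (nat \<Rightarrow> nat) \<Rightarrow> nat option \<Rightarrow> nat set \<Rightarrow> freealg" where
  "gen_vassiliev N m \<gamma> q v = (\<lambda>w.
     \<Sum>j\<in>v. w_free N m (vass_perm m \<gamma> q (j - 1)) w - w_free N m (vass_perm m \<gamma> q j) w)"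

end

theory Submission
  imports Defs "HOL-Library.Function_Algebras"
begin



lemma fsum_apply: "(\<Sum>x\<in>A. (f x :: 'a \<Rightarrow> 'b::comm_monoid_add)) w = (\<Sum>x\<in>A. f x w)"
  by (induction A rule: infinite_finite_induct) auto

lemma ideal_plus: "x \<in> gl_ideal N \<Longrightarrow> y \<in> gl_ideal N \<Longrightarrow> x + y \<in> gl_ideal N"
  using gl_ideal.add[of x N y] by (simp add: plus_fun_def)

lemma ideal_sum: "(\<And>x. x \<in> A \<Longrightarrow> f x \<in> gl_ideal N) \<Longrightarrow> sum f A \<in> gl_ideal N"
proof (induction A rule: infinite_finite_induct)
  case (infinite A) then show ?case using gl_ideal.zero[of N] by (simp add: zero_fun_def)
next
  case empty then show ?case using gl_ideal.zero[of N] by (simp add: zero_fun_def)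
next
  case (insert x F) then show ?case using sum.insert[OF insert(1,2), of f] ideal_plus by (metis insertCI)
qed

lemma bij_PiE_comp:
  assumes "bij_betw \<psi> A B"
  shows "bij_betw (\<lambda>g. restrict (g \<circ> \<psi>) A) ((B \<rightarrow>\<^sub>E R)) ((A \<rightarrow>\<^sub>E R))"
proof (rule bij_betwI[where g="\<lambda>i. restrict (i \<circ> inv_into A \<psi>) B"])
  show "(\<lambda>g. restrict (g \<circ> \<psi>) A) \<in> (B \<rightarrow>\<^sub>E R) \<rightarrow> (A \<rightarrow>\<^sub>E R)"
    using assms by (auto simp: bij_betw_def PiE_def Pi_def)
  show "(\<lambda>i. restrict (i \<circ> inv_into A \<psi>) B) \<in> (A \<rightarrow>\<^sub>E R) \<rightarrow> (B \<rightarrow>\<^sub>E R)"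
    using assms by (auto simp: bij_betw_def PiE_def Pi_def inv_into_into)
  fix g assume "g \<in> (B \<rightarrow>\<^sub>E R)"
  then show "restrict (restrict (g \<circ> \<psi>) A \<circ> inv_into A \<psi>) B = g"
    using assms by (auto simp: bij_betw_def PiE_def Pi_def inv_into_into f_inv_into_f extensional_def fun_eq_iff)
next
  fix i assume "i \<in> (A \<rightarrow>\<^sub>E R)"
  then show "restrict (restrict (i \<circ> inv_into A \<psi>) B \<circ> \<psi>) A = i"
    using assms by (auto simp: bij_betw_def PiE_def Pi_def inv_into_f_f extensional_def fun_eq_iff)
qed

definition wrd :: "(nat \<Rightarrow> nat) \<Rightarrow> (nat \<Rightarrow> nat) \<Rightarrow> (nat \<Rightarrow> nat) \<Rightarrow> nat \<Rightarrow> glword" where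
  "wrd g s t m = map (\<lambda>p. (g (s p), g (t p))) [1..<m]"

definition S :: "nat \<Rightarrow> nat \<Rightarrow> (nat \<Rightarrow> nat) \<Rightarrow> (nat \<Rightarrow> nat) \<Rightarrow> nat \<Rightarrow> nat \<Rightarrow> freealg" where
  "S N m s t a b = (\<Sum>g\<in>({0..<m} \<rightarrow>\<^sub>E {1..N}). if g a = g b then mono_fa (wrd g s t m) else 0)"

lemma S_rename:
  assumes "\<rho> permutes {0..<m}" "\<forall>p\<in>{1..<m}. s p < m \<and> t p < m" "a < m" "b < m"
  shows "S N m s t a b = S N m (\<rho> \<circ> s) (\<rho> \<circ> t) (\<rho> a) (\<rho> b)"
proof -
  have bij: "bij_betw (\<lambda>g. restrict (g \<circ> \<rho>) {0..<m}) (({0..<m} \<rightarrow>\<^sub>E {1..N})) (({0..<m} \<rightarrow>\<^sub>E {1..N}))"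
    by (rule bij_PiE_comp) (use assms(1) permutes_imp_bij in auto)
  have r: "\<rho> x < m" if "x < m" for x using assms(1) that permutes_in_image by fastforce
  show ?thesis unfolding S_def
    apply (subst sum.reindex_bij_betw[OF bij, symmetric])
    apply (rule sum.cong[OF refl])
    using assms(2,3,4) r by (auto simp: wrd_def intro!: arg_cong[where f=mono_fa] map_cong)
qed

lemma S_cong:
  assumes "\<forall>p\<in>{1..<m}. s p = s' p \<or> (s p = a \<and> s' p = b) \<or> (s p = b \<and> s' p = a)"
    "\<forall>p\<in>{1..<m}. t p = t' p \<or> (t p = a \<and> t' p = b) \<or> (t p = b \<and> t' p = a)"
  shows "S N m s t a b = S N m s' t' a b"
  unfolding S_def
proof (rule sum.cong[OF refl])
  fix g assume "g \<in> ({0..<m} \<rightarrow>\<^sub>E {1..N})"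
  show "(if g a = g b then mono_fa (wrd g s t m) else 0) = (if g a = g b then mono_fa (wrd g s' t' m) else 0)"
  proof (cases "g a = g b")
    case True
    have "wrd g s t m = wrd g s' t' m" unfolding wrd_def
    proof (rule map_cong[OF refl])
      fix p assume "p \<in> set [1..<m]"
      then have "p \<in> {1..<m}" by simp
      then show "(g (s p), g (t p)) = (g (s' p), g (t' p))" using assms True by metis
    qed
    then show ?thesis by simp
  qed simp
qed

lemma S_sym: "S N m s t a b = S N m s t b a"
  unfolding S_def by (rule sum.cong) auto

lemma S_indep:
  assumes "a < m" "b < m" "c < m" "a \<noteq> b" "a \<noteq> c"
    "\<forall>p\<in>{1..<m}. s p \<noteq> a \<and> t p \<noteq> a"
  shows "S N m s t a b = S N m s t a c"
proof -
  let ?P = "({0..<m} \<rightarrow>\<^sub>E {1..N})"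
  have ign: "wrd (g(a := z)) s t m = wrd g s t m" for g z
    unfolding wrd_def using assms(6) by (auto intro!: map_cong)
  have bij: "bij_betw (\<lambda>g. g(a := g c)) {g \<in> ?P. g a = g b} {g \<in> ?P. g a = g c}"
    apply (rule bij_betwI[where g="\<lambda>g. g(a := g b)"])
    using assms by (auto simp: PiE_def Pi_def extensional_def fun_eq_iff)
  have "S N m s t a b = (\<Sum>g\<in>{g \<in> ?P. g a = g b}. mono_fa (wrd g s t m))"
    unfolding S_def by (simp add: sum.inter_filter finite_PiE)
  also have "\<dots> = (\<Sum>g\<in>{g \<in> ?P. g a = g c}. mono_fa (wrd g s t m))"
    by (subst sum.reindex_bij_betw[OF bij, symmetric]) (simp add: ign)
  also have "\<dots> = S N m s t a c"
    unfolding S_def by (simp add: sum.inter_filter finite_PiE)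
  finally show ?thesis .
qed



lemma w_free_sum:
  "w_free N m \<alpha> = (\<Sum>i\<in>{1..m} \<rightarrow>\<^sub>E {1..N}. mono_fa (map (\<lambda>k. (i k, i (\<alpha> k))) [1..<m+1]))"
proof (rule ext)
  fix w
  let ?P = "{1..m} \<rightarrow>\<^sub>E {1..N}"
  let ?f = "\<lambda>i. map (\<lambda>k. (i k, i (\<alpha> k))) [1..<m+1]"
  have fin: "finite ?P" by (simp add: finite_PiE)
  have "w_free N m \<alpha> w = of_nat (card {i \<in> ?P. ?f i = w})" unfolding w_free_def by (simp del: upt_Suc)
  also have "\<dots> = (\<Sum>i\<in>{i \<in> ?P. ?f i = w}. (1::complex))" by simp
  also have "\<dots> = (\<Sum>i\<in>?P. if ?f i = w then 1 else 0)" by (rule sum.inter_filter[OF fin])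
  also have "\<dots> = (\<Sum>i\<in>?P. mono_fa (?f i) w)" by (rule sum.cong) (auto simp: mono_fa_def)
  finally show "w_free N m \<alpha> w = (\<Sum>i\<in>?P. mono_fa (?f i)) w" by (simp add: fsum_apply)
qed



definition Tq :: "(nat \<Rightarrow> nat) \<Rightarrow> nat option \<Rightarrow> nat \<Rightarrow> nat" where
  "Tq \<gamma> q = (case q of None \<Rightarrow> \<gamma> | Some q' \<Rightarrow> \<gamma>(q' := 0))"
definition Hq :: "(nat \<Rightarrow> nat) \<Rightarrow> nat option \<Rightarrow> nat" where
  "Hq \<gamma> q = (case q of None \<Rightarrow> 0 | Some q' \<Rightarrow> \<gamma> q')"
definition Wd :: "(nat \<Rightarrow> nat) \<Rightarrow> (nat \<Rightarrow> nat) \<Rightarrow> nat option \<Rightarrow> nat \<Rightarrow> nat \<Rightarrow> glword" where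
  "Wd g \<gamma> q m t = take t (wrd g id (Tq \<gamma> q) m) @ [(g 0, g (Hq \<gamma> q))] @ drop t (wrd g id (Tq \<gamma> q) m)"
definition psi :: "nat \<Rightarrow> nat \<Rightarrow> nat" where
  "psi t y = (if y = Suc t then 0 else if y \<le> t then y else y - 1)"

lemma psi_bij: "t < m \<Longrightarrow> bij_betw (psi t) {1..m} {0..<m}"
  apply (rule bij_betwI[where g="\<lambda>p. if p = 0 then Suc t else ins_gap t p"])
  apply (simp_all add: Pi_def psi_def ins_gap_def)
  apply (intro allI impI; linarith)
  apply linarith
  done

lemma gamma_in: "\<gamma> permutes {1..n} \<Longrightarrow> x \<in> {1..n} \<Longrightarrow> \<gamma> x \<in> {1..n}"
  using permutes_in_image[of \<gamma> "{1..n}" x] by (simp only:)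

lemma vp:
  assumes g: "\<gamma> permutes {1..m-1}" and q: "\<forall>q'. q = Some q' \<longrightarrow> q' \<in> {1..m-1}"
    and t: "t < m" and k: "k \<in> {1..m}"
  shows "vass_perm m \<gamma> q t k \<in> {1..m} \<and>
    psi t (vass_perm m \<gamma> q t k) = (if k = Suc t then Hq \<gamma> q else Tq \<gamma> q (psi t k))"
proof (cases "k = Suc t")
  case True
  then show ?thesis
  proof (cases q)
    case None then show ?thesis using True t by (simp add: vass_perm_def psi_def Hq_def)
  next
    case (Some q')
    then have "\<gamma> q' \<in> {1..m-1}" using q gamma_in[OF g] by auto
    then show ?thesis using True t Some by (auto simp: vass_perm_def psi_def Hq_def ins_gap_def)
  qed
next
  case False
  define p where "p = (if k \<le> t then k else k - 1)"
  have p: "p \<in> {1..m-1}" using k False t by (auto simp: p_def)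
  have pk: "psi t k = p" using False by (simp add: psi_def p_def)
  have gp: "\<gamma> p \<in> {1..m-1}" using gamma_in[OF g p] .
  show ?thesis
  proof (cases "q = Some p")
    case True
    then show ?thesis using False k t pk by (simp add: vass_perm_def psi_def Tq_def Let_def p_def)
  next
    case nq: False
    have "Tq \<gamma> q p = \<gamma> p" using nq by (cases q) (auto simp: Tq_def)
    then show ?thesis using False k t pk nq gp
      by (auto simp: vass_perm_def psi_def ins_gap_def Let_def p_def)
  qed
qed




lemma W:
  assumes g: "\<gamma> permutes {1..m-1}" and q: "\<forall>q'. q = Some q' \<longrightarrow> q' \<in> {1..m-1}"
    and t: "t < m"
  shows "w_free N m (vass_perm m \<gamma> q t) = (\<Sum>g\<in>{0..<m} \<rightarrow>\<^sub>E {1..N}. mono_fa (Wd g \<gamma> q m t))"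
proof -
  let ?\<alpha> = "vass_perm m \<gamma> q t"
  have bij: "bij_betw (\<lambda>g. restrict (g \<circ> psi t) {1..m}) ({0..<m} \<rightarrow>\<^sub>E {1..N}) ({1..m} \<rightarrow>\<^sub>E {1..N})"
    by (rule bij_PiE_comp[OF psi_bij[OF t]])
  have eq: "map (\<lambda>k. (restrict (g \<circ> psi t) {1..m} k, restrict (g \<circ> psi t) {1..m} (?\<alpha> k))) [1..<m+1]
      = Wd g \<gamma> q m t" for g
  proof (rule nth_equalityI)
    show "length (map (\<lambda>k. (restrict (g \<circ> psi t) {1..m} k, restrict (g \<circ> psi t) {1..m} (?\<alpha> k))) [1..<m+1]) =
      length (Wd g \<gamma> q m t)" using t by (simp add: Wd_def wrd_def)
  next
    fix i assume "i < length (map (\<lambda>k. (restrict (g \<circ> psi t) {1..m} k, restrict (g \<circ> psi t) {1..m} (?\<alpha> k))) [1..<m+1])"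
    then have i: "i < m" by (simp del: upt_Suc)
    have v: "?\<alpha> (Suc i) \<in> {1..m}" and
      v2: "psi t (?\<alpha> (Suc i)) = (if Suc i = Suc t then Hq \<gamma> q else Tq \<gamma> q (psi t (Suc i)))"
      using vp[OF g q t, of "Suc i"] i by auto
    have lhs: "map (\<lambda>k. (restrict (g \<circ> psi t) {1..m} k, restrict (g \<circ> psi t) {1..m} (?\<alpha> k))) [1..<m+1] ! i
       = (g (psi t (Suc i)), g (psi t (?\<alpha> (Suc i))))"
      using i v by (simp del: upt_Suc)
    show "map (\<lambda>k. (restrict (g \<circ> psi t) {1..m} k, restrict (g \<circ> psi t) {1..m} (?\<alpha> k))) [1..<m+1] ! i = Wd g \<gamma> q m t ! i"
      unfolding lhs v2
    proof -
      let ?L = "wrd g id (Tq \<gamma> q) m"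
      have lL: "length ?L = m - 1" by (simp add: wrd_def)
      have Li: "j < m - 1 \<Longrightarrow> ?L ! j = (g (Suc j), g (Tq \<gamma> q (Suc j)))" for j
        by (simp add: wrd_def)
      consider "i < t" | "i = t" | "t < i" by linarith
      then show "(g (psi t (Suc i)), g (if Suc i = Suc t then Hq \<gamma> q else Tq \<gamma> q (psi t (Suc i)))) = Wd g \<gamma> q m t ! i"
      proof cases
        case 1
        then have "Wd g \<gamma> q m t ! i = ?L ! i" using lL t by (simp add: Wd_def nth_append)
        then show ?thesis using 1 Li[of i] t by (simp add: psi_def)
      next
        case 2
        then show ?thesis using lL t by (simp add: Wd_def nth_append psi_def)
      next
        case 3
        then have "Wd g \<gamma> q m t ! i = ?L ! (i - 1)" using lL t i by (simp add: Wd_def nth_append)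
        then show ?thesis using 3 Li[of "i - 1"] t i by (simp add: psi_def)
      qed
    qed
  qed
  show ?thesis
    unfolding w_free_sum
    by (subst sum.reindex_bij_betw[OF bij, symmetric]) (rule sum.cong[OF refl], simp only: eq)
qed




lemma minus_apply': "((f::'a \<Rightarrow> 'b::minus) - g) x = f x - g x"
  by (simp add: fun_diff_def)

lemma wrd_upd:
  assumes j: "1 \<le> j" "j < m" and s: "\<forall>p. p \<noteq> j \<longrightarrow> s' p = s p" and t: "\<forall>p. p \<noteq> j \<longrightarrow> t' p = t p"
  shows "wrd g s' t' m = take (j - 1) (wrd g s t m) @ [(g (s' j), g (t' j))] @ drop j (wrd g s t m)"
proof -
  have "wrd g s' t' m = (wrd g s t m)[j - 1 := (g (s' j), g (t' j))]"
  proof (rule nth_equalityI)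
    show "length (wrd g s' t' m) = length ((wrd g s t m)[j - 1 := (g (s' j), g (t' j))])"
      by (simp add: wrd_def)
  next
    fix i assume "i < length (wrd g s' t' m)"
    then have i: "i < m - 1" by (simp add: wrd_def)
    show "wrd g s' t' m ! i = (wrd g s t m)[j - 1 := (g (s' j), g (t' j))] ! i"
    proof (cases "i = j - 1")
      case True then show ?thesis using i j by (simp add: wrd_def)
    next
      case False
      then have "Suc i \<noteq> j" using j by auto
      then show ?thesis using i j s t False by (simp add: wrd_def)
    qed
  qed
  also have "\<dots> = take (j - 1) (wrd g s t m) @ [(g (s' j), g (t' j))] @ drop j (wrd g s t m)"
    using j by (simp add: upd_conv_take_nth_drop wrd_def)
  finally show ?thesis .
qed

definition Aj where "Aj N m \<gamma> q j = S N m (id(j := 0)) (Tq \<gamma> q) (Hq \<gamma> q) j"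
definition Bj where "Bj N m \<gamma> q j = S N m id ((Tq \<gamma> q)(j := Hq \<gamma> q)) (Tq \<gamma> q j) 0"
definition Gj where "Gj N m \<gamma> q j = (\<Sum>g\<in>{0..<m} \<rightarrow>\<^sub>E {1..N}.
   gl_rel (take (j - 1) (wrd g id (Tq \<gamma> q) m)) (g 0, g (Hq \<gamma> q)) (wrd g id (Tq \<gamma> q) m ! (j - 1))
     (drop j (wrd g id (Tq \<gamma> q) m)))"

lemma step_g:
  assumes j: "1 \<le> j" "j < m"
  shows "mono_fa (Wd g \<gamma> q m (j - 1)) - mono_fa (Wd g \<gamma> q m j) =
    gl_rel (take (j - 1) (wrd g id (Tq \<gamma> q) m)) (g 0, g (Hq \<gamma> q)) (wrd g id (Tq \<gamma> q) m ! (j - 1))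
     (drop j (wrd g id (Tq \<gamma> q) m))
    + (if g (Hq \<gamma> q) = g j then mono_fa (wrd g (id(j := 0)) (Tq \<gamma> q) m) else 0)
    - (if g (Tq \<gamma> q j) = g 0 then mono_fa (wrd g id ((Tq \<gamma> q)(j := Hq \<gamma> q)) m) else 0)"
proof -
  let ?L = "wrd g id (Tq \<gamma> q) m"
  let ?u = "take (j - 1) ?L" and ?v = "drop j ?L" and ?X = "(g 0, g (Hq \<gamma> q))"
  have lL: "length ?L = m - 1" by (simp add: wrd_def)
  have u: "[Suc 0..<m] ! (j - Suc 0) = j" using j nth_upt[of "Suc 0" "j - Suc 0" m] by simp
  have Lj: "?L ! (j - 1) = (g j, g (Tq \<gamma> q j))" using j u by (simp add: wrd_def)
  have e1: "Wd g \<gamma> q m (j - 1) = ?u @ [?X, ?L ! (j - 1)] @ ?v"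
  proof -
    have "drop (j - 1) ?L = ?L ! (j - 1) # ?v"
      using j lL Cons_nth_drop_Suc[of "j - 1" ?L] by simp
    then show ?thesis unfolding Wd_def by simp
  qed
  have e2: "Wd g \<gamma> q m j = ?u @ [?L ! (j - 1), ?X] @ ?v"
  proof -
    have "take j ?L = ?u @ [?L ! (j - 1)]" using j lL take_Suc_conv_app_nth[of "j - 1" ?L] by simp
    then show ?thesis unfolding Wd_def by simp
  qed
  have e3: "wrd g (id(j := 0)) (Tq \<gamma> q) m = ?u @ [(g 0, g (Tq \<gamma> q j))] @ ?v"
    using wrd_upd[OF j, where s'="id(j := 0)" and s=id and t'="Tq \<gamma> q" and t="Tq \<gamma> q" and g=g] by simp
  have e4: "wrd g id ((Tq \<gamma> q)(j := Hq \<gamma> q)) m = ?u @ [(g j, g (Hq \<gamma> q))] @ ?v"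
    using wrd_upd[OF j, where s'=id and s=id and t'="(Tq \<gamma> q)(j := Hq \<gamma> q)" and t="Tq \<gamma> q" and g=g] by simp
  show ?thesis
    unfolding e1 e2 e3 e4 Lj
    by (rule ext) (simp add: gl_rel_def minus_apply')
qed




lemma Tq_range:
  assumes g: "\<gamma> permutes {1..m-1}" and q: "\<forall>q'. q = Some q' \<longrightarrow> q' \<in> {1..m-1}"
    and p: "p \<in> {1..<m}"
  shows "Tq \<gamma> q p < m"
proof -
  have "\<gamma> p \<in> {1..m-1}" using gamma_in[OF g] p by auto
  then show ?thesis by (cases q) (auto simp: Tq_def)
qed

lemma Hq_range:
  assumes g: "\<gamma> permutes {1..m-1}" and q: "\<forall>q'. q = Some q' \<longrightarrow> q' \<in> {1..m-1}" and m: "m \<ge> 2"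
  shows "Hq \<gamma> q < m"
proof (cases q)
  case None then show ?thesis using m by (simp add: Hq_def)
next
  case (Some q')
  then have "\<gamma> q' \<in> {1..m-1}" using gamma_in[OF g] q by auto
  then show ?thesis using Some by (auto simp: Hq_def)
qed

lemma wrd_idx:
  assumes "\<forall>p\<in>{1..<m}. s p < m \<and> t p < m" "g \<in> {0..<m} \<rightarrow>\<^sub>E {1..N}"
  shows "set (wrd g s t m) \<subseteq> gl_idx N"
  using assms unfolding wrd_def gl_idx_def by (auto simp: PiE_def Pi_def)

lemma Gj_ideal:
  assumes g: "\<gamma> permutes {1..m-1}" and q: "\<forall>q'. q = Some q' \<longrightarrow> q' \<in> {1..m-1}" and m: "m \<ge> 2"
    and j: "1 \<le> j" "j < m"
  shows "Gj N m \<gamma> q j \<in> gl_ideal N"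
  unfolding Gj_def
proof (rule ideal_sum)
  fix f assume f: "f \<in> {0..<m} \<rightarrow>\<^sub>E {1..N}"
  let ?L = "wrd f id (Tq \<gamma> q) m"
  have sL: "set ?L \<subseteq> gl_idx N"
    by (rule wrd_idx[OF _ f]) (use Tq_range[OF g q] in auto)
  have lL: "length ?L = m - 1" by (simp add: wrd_def)
  have h: "Hq \<gamma> q < m" by (rule Hq_range[OF g q m])
  have X: "(f 0, f (Hq \<gamma> q)) \<in> gl_idx N" using f h m by (auto simp: gl_idx_def PiE_def Pi_def)
  have "j - 1 < length ?L" using lL j by simp
  then have Lj: "?L ! (j - 1) \<in> gl_idx N" using sL nth_mem by blast
  have u: "set (take (j - 1) ?L) \<subseteq> gl_idx N" by (rule order_trans[OF set_take_subset sL])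
  have v: "set (drop j ?L) \<subseteq> gl_idx N" by (rule order_trans[OF set_drop_subset sL])
  show "gl_rel (take (j - 1) ?L) (f 0, f (Hq \<gamma> q)) (?L ! (j - 1)) (drop j ?L) \<in> gl_ideal N"
    by (rule gl_ideal.gen[OF u v X Lj])
qed

lemma step_sum:
  assumes g: "\<gamma> permutes {1..m-1}" and q: "\<forall>q'. q = Some q' \<longrightarrow> q' \<in> {1..m-1}"
    and j: "1 \<le> j" "j < m"
  shows "w_free N m (vass_perm m \<gamma> q (j - 1)) - w_free N m (vass_perm m \<gamma> q j)
       = Gj N m \<gamma> q j + Aj N m \<gamma> q j - Bj N m \<gamma> q j"
proof -
  have j1: "j - 1 < m" using j by simp
  have "w_free N m (vass_perm m \<gamma> q (j - 1)) - w_free N m (vass_perm m \<gamma> q j)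
     = (\<Sum>g\<in>{0..<m} \<rightarrow>\<^sub>E {1..N}. mono_fa (Wd g \<gamma> q m (j - 1)) - mono_fa (Wd g \<gamma> q m j))"
    unfolding W[OF g q j1] W[OF g q j(2)] by (rule sum_subtractf[symmetric])
  also have "\<dots> = Gj N m \<gamma> q j + Aj N m \<gamma> q j - Bj N m \<gamma> q j"
    unfolding step_g[OF j] Gj_def Aj_def Bj_def S_def
    by (simp only: sum_subtractf sum.distrib)
  finally show ?thesis .
qed




lemma gam_facts:
  fixes \<gamma> :: "nat \<Rightarrow> nat"
  assumes g: "\<gamma> permutes {1..m-1}" and p: "p \<in> {1..<m}"
  shows "\<gamma> p \<in> {1..<m}"
proof -
  have "p \<in> {1..m-1}" using p by auto
  then have "\<gamma> p \<in> {1..m-1}" by (rule gamma_in[OF g])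
  then show ?thesis using p by auto
qed

lemma AB_none:
  fixes \<gamma> :: "nat \<Rightarrow> nat"
  assumes g: "\<gamma> permutes {1..m-1}" and j: "j \<in> {1..<m}"
  shows "Aj N m \<gamma> None j = Bj N m \<gamma> None j"
proof -
  have gr: "\<And>p. p \<in> {1..<m} \<Longrightarrow> \<gamma> p \<in> {1..<m}" using gam_facts[OF g] by blast
  have gj: "\<gamma> j \<in> {1..<m}" using gr j .
  have "Aj N m \<gamma> None j = S N m (id(j := 0)) \<gamma> 0 j" by (simp add: Aj_def Tq_def Hq_def)
  also have "\<dots> = S N m id \<gamma> 0 j" by (rule S_cong) auto
  also have "\<dots> = S N m id \<gamma> 0 (\<gamma> j)"
    by (rule S_indep) (use j gj gr in fastforce)+
  also have "\<dots> = S N m id (\<gamma>(j := 0)) 0 (\<gamma> j)" by (rule S_cong) auto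
  also have "\<dots> = Bj N m \<gamma> None j" by (simp add: Bj_def Tq_def Hq_def S_sym)
  finally show ?thesis .
qed

lemma AB_some:
  fixes \<gamma> :: "nat \<Rightarrow> nat"
  assumes g: "\<gamma> permutes {1..m-1}" and q': "q' \<in> {1..<m}" and k: "k \<in> {1..<m}"
  shows "Aj N m \<gamma> (Some q') (\<gamma> k) = Bj N m \<gamma> (Some q') k"
proof -
  have gr: "\<And>p. p \<in> {1..<m} \<Longrightarrow> \<gamma> p \<in> {1..<m}" using gam_facts[OF g] by blast
  have g1: "\<And>p. 1 \<le> p \<Longrightarrow> p < m \<Longrightarrow> 1 \<le> \<gamma> p" using gr by fastforce
  have gpos: "\<And>p. 1 \<le> p \<Longrightarrow> p < m \<Longrightarrow> 0 < \<gamma> p" using gr by fastforce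
  have gpm: "\<And>p. 1 \<le> p \<Longrightarrow> p < m \<Longrightarrow> \<gamma> p < m" using gr by fastforce
  have inj: "\<And>x y. \<gamma> x = \<gamma> y \<longleftrightarrow> x = y" using permutes_inj[OF g] by (auto dest: injD)
  have gq: "\<gamma> q' \<in> {1..<m}" using gr q' .
  have gk: "\<gamma> k \<in> {1..<m}" using gr k .
  show ?thesis
  proof (cases "k = q'")
    case True
    let ?\<rho> = "Transposition.transpose 0 (\<gamma> q')"
    have rho: "?\<rho> permutes {0..<m}" by (rule permutes_swap_id) (use gq in auto)
    have "Aj N m \<gamma> (Some q') (\<gamma> k) = S N m (id(\<gamma> q' := 0)) (\<gamma>(q' := 0)) (\<gamma> q') (\<gamma> q')"
      using True by (simp add: Aj_def Tq_def Hq_def)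
    also have "\<dots> = S N m (?\<rho> \<circ> id(\<gamma> q' := 0)) (?\<rho> \<circ> \<gamma>(q' := 0)) (?\<rho> (\<gamma> q')) (?\<rho> (\<gamma> q'))"
      by (rule S_rename[OF rho]) (use gq gr in auto)
    also have "\<dots> = S N m id \<gamma> 0 0"
      apply simp
      apply (rule S_cong)
      using gq gr inj gpos by (auto simp: transpose_def)
    also have "\<dots> = Bj N m \<gamma> (Some q') k"
      using True by (simp add: Bj_def Tq_def Hq_def)
    finally show ?thesis .
  next
    case False
    define j where "j = \<gamma> k"
    have jr: "j \<in> {1..<m}" using gk j_def by simp
    have jq: "\<gamma> q' \<noteq> j" using False inj j_def by auto
    define ts where "ts = \<gamma>(k := \<gamma> q', q' := j)"
    have tsr: "\<forall>p\<in>{1..<m}. ts p \<noteq> 0" using gpos gq jr by (auto simp: ts_def)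
    let ?\<rho> = "Transposition.transpose 0 j"
    have rho: "?\<rho> permutes {0..<m}" by (rule permutes_swap_id) (use jr in auto)
    have "Aj N m \<gamma> (Some q') (\<gamma> k) = S N m (id(j := 0)) (\<gamma>(q' := 0)) (\<gamma> q') j"
      by (simp add: Aj_def Tq_def Hq_def j_def)
    also have "\<dots> = S N m (?\<rho> \<circ> id(j := 0)) (?\<rho> \<circ> \<gamma>(q' := 0)) (?\<rho> (\<gamma> q')) (?\<rho> j)"
      by (rule S_rename[OF rho]) (use gq gpm jr in auto)
    also have "\<dots> = S N m (?\<rho> \<circ> id(j := 0)) (?\<rho> \<circ> \<gamma>(q' := 0)) 0 (\<gamma> q')"
      using jq gq by (simp add: S_sym)
    also have "\<dots> = S N m id ts 0 (\<gamma> q')"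
    proof (rule S_cong)
      show "\<forall>p\<in>{1..<m}. (?\<rho> \<circ> id(j := 0)) p = id p \<or> ((?\<rho> \<circ> id(j := 0)) p = 0 \<and> id p = \<gamma> q') \<or>
           ((?\<rho> \<circ> id(j := 0)) p = \<gamma> q' \<and> id p = 0)"
        using jr by (auto simp: transpose_def)
      show "\<forall>p\<in>{1..<m}. (?\<rho> \<circ> \<gamma>(q' := 0)) p = ts p \<or> ((?\<rho> \<circ> \<gamma>(q' := 0)) p = 0 \<and> ts p = \<gamma> q') \<or>
           ((?\<rho> \<circ> \<gamma>(q' := 0)) p = \<gamma> q' \<and> ts p = 0)"
      proof
        fix p assume p: "p \<in> {1..<m}"
        consider "p = q'" | "p = k" "p \<noteq> q'" | "p \<noteq> k" "p \<noteq> q'" by blast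
        then show "(?\<rho> \<circ> \<gamma>(q' := 0)) p = ts p \<or> ((?\<rho> \<circ> \<gamma>(q' := 0)) p = 0 \<and> ts p = \<gamma> q') \<or>
           ((?\<rho> \<circ> \<gamma>(q' := 0)) p = \<gamma> q' \<and> ts p = 0)"
        proof cases
          case 1 then show ?thesis by (simp add: ts_def)
        next
          case 2 then show ?thesis by (simp add: ts_def j_def)
        next
          case 3
          have "\<gamma> p \<noteq> j" using 3 inj j_def by auto
          moreover have "\<gamma> p \<noteq> 0" using gpos p by fastforce
          ultimately show ?thesis using 3 by (simp add: ts_def transpose_def)
        qed
      qed
    qed
    also have "\<dots> = S N m id ts 0 j"
      by (rule S_indep) (use gq jr tsr in auto)
    also have "\<dots> = S N m id ((\<gamma>(q' := 0))(k := \<gamma> q')) 0 j"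
    proof (rule S_cong)
      show "\<forall>p\<in>{1..<m}. id p = id p \<or> (id p = 0 \<and> id p = j) \<or> (id p = j \<and> id p = 0)" by simp
      show "\<forall>p\<in>{1..<m}. ts p = ((\<gamma>(q' := 0))(k := \<gamma> q')) p \<or> (ts p = 0 \<and> ((\<gamma>(q' := 0))(k := \<gamma> q')) p = j) \<or>
           (ts p = j \<and> ((\<gamma>(q' := 0))(k := \<gamma> q')) p = 0)"
        using False by (auto simp: ts_def)
    qed
    also have "\<dots> = Bj N m \<gamma> (Some q') k"
      using False by (simp add: Bj_def Tq_def Hq_def j_def S_sym)
    finally show ?thesis .
  qed
qed




lemma cyc_sub:
  fixes \<gamma> :: "nat \<Rightarrow> nat"
  assumes g: "\<gamma> permutes {1..m-1}" and a: "a \<in> {1..m-1}"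
  shows "perm_cycle \<gamma> a \<subseteq> {1..m-1}"
proof -
  have "(\<gamma> ^^ n) a \<in> {1..m-1}" for n
    by (induction n) (use a gamma_in[OF g] in auto)
  then show ?thesis unfolding perm_cycle_def by blast
qed

lemma cyc_img:
  fixes \<gamma> :: "nat \<Rightarrow> nat"
  assumes g: "\<gamma> permutes {1..m-1}" and a: "a \<in> {1..m-1}"
  shows "\<gamma> ` perm_cycle \<gamma> a = perm_cycle \<gamma> a"
proof -
  let ?v = "perm_cycle \<gamma> a"
  have fin: "finite ?v" using cyc_sub[OF g a] finite_subset by blast
  have sub: "\<gamma> ` ?v \<subseteq> ?v"
  proof
    fix y assume "y \<in> \<gamma> ` ?v"
    then obtain n where "y = \<gamma> ((\<gamma> ^^ n) a)" unfolding perm_cycle_def by blast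
    then have "y = (\<gamma> ^^ Suc n) a" by simp
    then show "y \<in> ?v" unfolding perm_cycle_def by blast
  qed
  have "card (\<gamma> ` ?v) = card ?v"
    by (rule card_image) (use permutes_inj[OF g] inj_on_subset in blast)
  then show ?thesis using card_subset_eq[OF fin sub] by blast
qed

theorem theorem3:
  fixes N m a :: nat and \<gamma> :: "nat \<Rightarrow> nat" and q :: "nat option"
  assumes "N \<ge> 1" and "m \<ge> 2"
    and "\<gamma> permutes {1..m-1}"
    and "\<forall>q'. q = Some q' \<longrightarrow> q' \<in> {1..m-1}"
    and "a \<in> {1..m-1}"
  shows "gen_vassiliev N m \<gamma> q (perm_cycle \<gamma> a) \<in> gl_ideal N"
proof -
  note g = assms(3) and q = assms(4) and m = assms(2)
  let ?v = "perm_cycle \<gamma> a"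
  have vsub: "?v \<subseteq> {1..m-1}" by (rule cyc_sub[OF g assms(5)])
  have vj: "1 \<le> j \<and> j < m" if "j \<in> ?v" for j
  proof -
    have "j \<in> {1..m-1}" using vsub that by blast
    then show ?thesis using m by auto
  qed
  have fin: "finite ?v" using vsub finite_subset by blast
  have "gen_vassiliev N m \<gamma> q ?v =
      (\<Sum>j\<in>?v. w_free N m (vass_perm m \<gamma> q (j - 1)) - w_free N m (vass_perm m \<gamma> q j))"
    by (rule ext) (simp add: gen_vassiliev_def fsum_apply minus_apply')
  also have "\<dots> = (\<Sum>j\<in>?v. Gj N m \<gamma> q j + Aj N m \<gamma> q j - Bj N m \<gamma> q j)"
    by (rule sum.cong[OF refl]) (use vj step_sum[OF g q] in blast)
  also have "\<dots> = (\<Sum>j\<in>?v. Gj N m \<gamma> q j) + ((\<Sum>j\<in>?v. Aj N m \<gamma> q j) - (\<Sum>j\<in>?v. Bj N m \<gamma> q j))"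
    by (simp add: sum.distrib sum_subtractf)
  also have "(\<Sum>j\<in>?v. Aj N m \<gamma> q j) = (\<Sum>j\<in>?v. Bj N m \<gamma> q j)"
  proof (cases q)
    case None
    show ?thesis unfolding None
      by (rule sum.cong[OF refl], rule AB_none[OF g]) (use vj in auto)
  next
    case (Some q')
    have q': "q' \<in> {1..<m}" using q Some m by auto
    have inj: "inj_on \<gamma> ?v" using permutes_inj[OF g] inj_on_subset by blast
    have "(\<Sum>j\<in>?v. Aj N m \<gamma> q j) = (\<Sum>j\<in>\<gamma> ` ?v. Aj N m \<gamma> q j)"
      using cyc_img[OF g assms(5)] by simp
    also have "\<dots> = (\<Sum>k\<in>?v. Aj N m \<gamma> q (\<gamma> k))"
      by (simp add: sum.reindex[OF inj])
    also have "\<dots> = (\<Sum>k\<in>?v. Bj N m \<gamma> q k)"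
      unfolding Some
      by (rule sum.cong[OF refl], rule AB_some[OF g q']) (use vj in auto)
    finally show ?thesis .
  qed
  finally have "gen_vassiliev N m \<gamma> q ?v = (\<Sum>j\<in>?v. Gj N m \<gamma> q j)" by simp
  moreover have "(\<Sum>j\<in>?v. Gj N m \<gamma> q j) \<in> gl_ideal N"
    by (rule ideal_sum, rule Gj_ideal[OF g q m]) (use vj in auto)
  ultimately show ?thesis by simp
qed


end
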